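(* Let $g\in H(\mathbb{D})$, let $\nu$ be a weight satisfying property (U) and let $\mu$ be a weight. Then the following are equivalent: (1) $S_g: H^{\infty}_\nu\rightarrow \mathcal{B}^{\infty}_\mu$ is bounded; (2) $\sup_{z\in\mathbb{D}}\frac{\mu(z)}{(1-|z|^2)\nu(z)}|g(z)|<\infty$. If, in addition, $\nu$ and $\mu$ are typical weights, then (1) and (2) are also equivalent to (3) $S_g: H^{0}_\nu\rightarrow \mathcal{B}^{0}_\mu$ is bounded.
   Context: $\mathbb{D}$ is the open unit disk and $H(\mathbb{D})$ the space of analytic functions on $\mathbb{D}$. A weight is a non-negative continuous function $\nu$ on $\mathbb{D}$ with $\nu(z)=\nu(|z|)$ for all $z$, which is decreasing in $|z|$. For a weight $\nu$: $H^{\infty}_\nu=\{f\in H(\mathbb{D}): \sup_{z}\nu(z)|f(z)|<\infty\}$, $H^{0}_\nu=\{f\in H(\mathbb{D}): \lim_{|z|\to1^-}\nu(z)|f(z)|=0\}$, $\mathcal{B}^{\infty}_\nu=\{f\in H(\mathbb{D}): |f(0)|+\sup_{z}\nu(z)|f'(z)|<\infty\}$, $\mathcal{B}^{0}_\nu=\{f\in H(\mathbb{D}): \lim_{|z|\to1^-}\nu(z)|f'(z)|=0\}$, each with its natural norm. A weight $\nu$ is typical if $\lim_{|z|\to1^-}\nu(z)=0$. A weight $\nu$ satisfies property (U) if there is $\alpha>0$ such that $r\mapsto \nu(r)/(1-r^2)^\alpha$ is almost increasing on $[0,1)$ (i.e. there is $C>0$ with $h(r)\le C h(s)$ whenever $r\le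 s$), equivalently $\inf_n \nu(1-2^{-(n+1)})/\nu(1-2^{-n})>0$. For $g\in H(\mathbb{D})$, $(S_gf)(z)=\int_0^z f'(\omega)g(\omega)\,d\omega$. *)

theory Defs
  imports "HOL-Complex_Analysis.Complex_Analysis"
begin

abbreviation disc :: "complex set" where "disc \<equiv> ball 0 1"

definition is_weight :: "(complex \<Rightarrow> real) \<Rightarrow> bool" where
  "is_weight \<nu> \<longleftrightarrow> continuous_on disc \<nu>
     \<and> (\<forall>z\<in>disc. 0 \<le> \<nu> z)
     \<and> (\<forall>z\<in>disc. \<nu> z = \<nu> (complex_of_real (norm z)))
     \<and> (\<forall>z\<in>disc. \<forall>w\<in>disc. norm z \<le> norm w \<longrightarrow> \<nu> w \<le> \<nu> z)"

definition radial_lim0 :: "(complex \<Rightarrow> real) \<Rightarrow> bool" where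
  "radial_lim0 h \<longleftrightarrow> (\<forall>\<epsilon>>0. \<exists>r<1. \<forall>z. r < norm z \<and> norm z < 1 \<longrightarrow> \<bar>h z\<bar> < \<epsilon>)"

definition typical_weight :: "(complex \<Rightarrow> real) \<Rightarrow> bool" where
  "typical_weight \<nu> \<longleftrightarrow> is_weight \<nu> \<and> radial_lim0 \<nu>"

definition property_U :: "(complex \<Rightarrow> real) \<Rightarrow> bool" where
  "property_U \<nu> \<longleftrightarrow> (\<exists>\<alpha>>0. \<exists>C>0. \<forall>r s. 0 \<le> r \<and> r \<le> s \<and> s < 1 \<longrightarrow>
      \<nu> (complex_of_real r) / (1 - r\<^sup>2) powr \<alpha> \<le> C * (\<nu> (complex_of_real s) / (1 - s\<^sup>2) powr \<alpha>))"

definition Hinf :: "(complex \<Rightarrow> real) \<Rightarrow> (complex \<Rightarrow> complex) set" where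
  "Hinf \<nu> = {f. f holomorphic_on disc \<and> bdd_above ((\<lambda>z. \<nu> z * norm (f z)) ` disc)}"

definition H0 :: "(complex \<Rightarrow> real) \<Rightarrow> (complex \<Rightarrow> complex) set" where
  "H0 \<nu> = {f. f holomorphic_on disc \<and> radial_lim0 (\<lambda>z. \<nu> z * norm (f z))}"

definition H_norm :: "(complex \<Rightarrow> real) \<Rightarrow> (complex \<Rightarrow> complex) \<Rightarrow> real" where
  "H_norm \<nu> f = (SUP z\<in>disc. \<nu> z * norm (f z))"

definition Binf :: "(complex \<Rightarrow> real) \<Rightarrow> (complex \<Rightarrow> complex) set" where
  "Binf \<mu> = {f. f holomorphic_on disc \<and> bdd_above ((\<lambda>z. \<mu> z * norm (deriv f z)) ` disc)}"

definition B0 :: "(complex \<Rightarrow> real) \<Rightarrow> (complex \<Rightarrow> complex) set" where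
  "B0 \<mu> = {f. f holomorphic_on disc \<and> radial_lim0 (\<lambda>z. \<mu> z * norm (deriv f z))}"

definition B_norm :: "(complex \<Rightarrow> real) \<Rightarrow> (complex \<Rightarrow> complex) \<Rightarrow> real" where
  "B_norm \<mu> f = norm (f 0) + (SUP z\<in>disc. \<mu> z * norm (deriv f z))"

definition S_op :: "(complex \<Rightarrow> complex) \<Rightarrow> (complex \<Rightarrow> complex) \<Rightarrow> complex \<Rightarrow> complex" where
  "S_op g f z = contour_integral (linepath 0 z) (\<lambda>w. deriv f w * g w)"

definition bounded_op ::
  "((complex \<Rightarrow> complex) \<Rightarrow> (complex \<Rightarrow> complex)) \<Rightarrow> (complex \<Rightarrow> complex) set \<Rightarrow> ((complex \<Rightarrow> complex) \<Rightarrow> real)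
   \<Rightarrow> (complex \<Rightarrow> complex) set \<Rightarrow> ((complex \<Rightarrow> complex) \<Rightarrow> real) \<Rightarrow> bool" where
  "bounded_op T X nX Y nY \<longleftrightarrow> (\<forall>f\<in>X. T f \<in> Y) \<and> (\<exists>C. \<forall>f\<in>X. nY (T f) \<le> C * nX f)"

end

theory Submission imports Defs begin


lemma S_op_deriv:
  assumes f: "f holomorphic_on disc" and g: "g holomorphic_on disc" and z: "z \<in> disc"
  shows "(S_op g f has_field_derivative deriv f z * g z) (at z)"
proof -
  let ?h = "\<lambda>w. deriv f w * g w"
  have hh: "?h holomorphic_on disc"
    by (intro holomorphic_intros f g) auto
  have "((\<lambda>x. contour_integral (linepath 0 x) ?h) has_field_derivative ?h z) (at z within disc)"
  proof (rule triangle_contour_integrals_convex_primitive)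
    show "continuous_on disc ?h" using hh holomorphic_on_imp_continuous_on by blast
    fix b c assume "b \<in> disc" "c \<in> disc"
    then have "convex hull {0,b,c} \<subseteq> disc"
      by (simp add: hull_minimal)
    then have "(?h has_contour_integral 0) (linepath 0 b +++ linepath b c +++ linepath c 0)"
      by (intro Cauchy_theorem_triangle holomorphic_on_subset[OF hh])
    then show "contour_integral (linepath 0 b) ?h + contour_integral (linepath b c) ?h +
                       contour_integral (linepath c 0) ?h = 0"
      by (rule has_chain_integral_chain_integral3)
  qed (use z in \<open>simp_all\<close>)
  moreover have eq: "at z within disc = at z" by (rule at_within_open[OF z]) simp
  moreover have "S_op g f = (\<lambda>x. contour_integral (linepath 0 x) ?h)" by (rule ext) (simp add: S_op_def)
  ultimately show ?thesis by simp
qed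

lemma S_op_holo:
  assumes f: "f holomorphic_on disc" and g: "g holomorphic_on disc"
  shows "S_op g f holomorphic_on disc"
  unfolding holomorphic_on_def field_differentiable_def
proof
  fix z assume "z \<in> disc"
  then show "\<exists>f'. (S_op g f has_field_derivative f') (at z within disc)"
    using S_op_deriv[OF f g] has_field_derivative_at_within by meson
qed

lemma S_op_deriv_eq:
  assumes f: "f holomorphic_on disc" and g: "g holomorphic_on disc" and z: "z \<in> disc"
  shows "deriv (S_op g f) z = deriv f z * g z"
  using S_op_deriv[OF assms] DERIV_imp_deriv by blast

lemma S_op_0: "S_op g f 0 = 0"
  by (simp add: S_op_def)

lemma weight_radial: "is_weight \<nu> \<Longrightarrow> z \<in> disc \<Longrightarrow> \<nu> z = \<nu> (complex_of_real (norm z))"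
  unfolding is_weight_def by blast

lemma weight_dec: "is_weight \<nu> \<Longrightarrow> z \<in> disc \<Longrightarrow> w \<in> disc \<Longrightarrow> norm z \<le> norm w \<Longrightarrow> \<nu> w \<le> \<nu> z"
  unfolding is_weight_def by blast

lemma weight_nonneg: "is_weight \<nu> \<Longrightarrow> z \<in> disc \<Longrightarrow> 0 \<le> \<nu> z"
  unfolding is_weight_def by blast

lemma aux1: fixes a b p q C :: real shows "p>0 \<Longrightarrow> q>0 \<Longrightarrow> a/p \<le> C*(b/q) \<Longrightarrow> a \<le> C*b*(p/q)"
  by (simp add: divide_le_eq mult.commute mult.left_commute)

lemma aux2: fixes r :: real assumes "0 \<le> r" "r < 1"
  shows "1 - r\<^sup>2 > 0" "1 - ((1+r)/2)\<^sup>2 > 0" "1 - r\<^sup>2 \<le> 2 * (1 - ((1+r)/2)\<^sup>2)"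
proof -
  have a: "r * r < 1" using assms by (smt (verit) mult_left_le)
  have b: "0 \<le> (1-r)*(1-r)" by simp
  show "1 - r\<^sup>2 > 0" "1 - ((1+r)/2)\<^sup>2 > 0" "1 - r\<^sup>2 \<le> 2 * (1 - ((1+r)/2)\<^sup>2)"
    using a b assms by (auto simp: power2_eq_square field_simps)
qed

lemma U_doubling:
  assumes w: "is_weight \<nu>" and pos: "\<forall>z\<in>disc. \<nu> z > 0"
    and a: "\<alpha> > 0" and C: "C > 0"
    and U: "\<forall>r s. 0 \<le> r \<and> r \<le> s \<and> s < 1 \<longrightarrow>
      \<nu> (complex_of_real r) / (1 - r\<^sup>2) powr \<alpha> \<le> C * (\<nu> (complex_of_real s) / (1 - s\<^sup>2) powr \<alpha>)"
    and z: "z \<in> disc"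
  shows "\<nu> z \<le> C * 2 powr \<alpha> * \<nu> (complex_of_real ((1 + norm z)/2))"
proof -
  define r where "r = norm z"
  define s where "s = (1 + r)/2"
  have r1: "r < 1" using z by (simp add: r_def)
  have rs: "0 \<le> r" "r \<le> s" "s < 1" using r1 by (auto simp: s_def r_def)
  have sd: "complex_of_real s \<in> disc" using rs by simp
  have vs: "\<nu> (complex_of_real s) > 0" using pos sd by blast
  have p: "1 - r\<^sup>2 > 0" "1 - s\<^sup>2 > 0" "1 - r\<^sup>2 \<le> 2 * (1 - s\<^sup>2)"
    using aux2[OF rs(1) r1] by (simp_all add: s_def)
  have "\<nu> (complex_of_real r) / (1 - r\<^sup>2) powr \<alpha> \<le> C * (\<nu> (complex_of_real s) / (1 - s\<^sup>2) powr \<alpha>)"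
    using U rs by blast
  then have 1: "\<nu> (complex_of_real r) \<le> C * \<nu> (complex_of_real s) * ((1 - r\<^sup>2) powr \<alpha> / (1 - s\<^sup>2) powr \<alpha>)"
    using p by (intro aux1) auto
  have "(1 - r\<^sup>2) powr \<alpha> / (1 - s\<^sup>2) powr \<alpha> = ((1 - r\<^sup>2) / (1 - s\<^sup>2)) powr \<alpha>"
    using p by (simp add: powr_divide)
  also have "\<dots> \<le> 2 powr \<alpha>"
    using p a by (intro powr_mono2) (auto simp: divide_le_eq)
  finally have 2: "(1 - r\<^sup>2) powr \<alpha> / (1 - s\<^sup>2) powr \<alpha> \<le> 2 powr \<alpha>" .
  have "C * \<nu> (complex_of_real s) * ((1 - r\<^sup>2) powr \<alpha> / (1 - s\<^sup>2) powr \<alpha>) \<le> C * \<nu> (complex_of_real s) * 2 powr \<alpha>"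
    using 2 C vs by (intro mult_left_mono) auto
  with 1 have "\<nu> (complex_of_real r) \<le> C * 2 powr \<alpha> * \<nu> (complex_of_real s)"
    by (simp add: mult_ac)
  then show ?thesis using weight_radial[OF w z] by (simp add: r_def s_def)
qed


lemma cauchy_est:
  assumes w: "is_weight \<nu>" and pos: "\<forall>z\<in>disc. \<nu> z > 0"
    and a: "\<alpha> > 0" and C: "C > 0"
    and U: "\<forall>r s. 0 \<le> r \<and> r \<le> s \<and> s < 1 \<longrightarrow>
      \<nu> (complex_of_real r) / (1 - r\<^sup>2) powr \<alpha> \<le> C * (\<nu> (complex_of_real s) / (1 - s\<^sup>2) powr \<alpha>)"
    and f: "f holomorphic_on disc" and z: "z \<in> disc"
    and N: "\<And>w. dist z w = (1 - norm z)/2 \<Longrightarrow> \<nu> w * norm (f w) \<le> N"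
  shows "(1 - norm z) * \<nu> z * norm (deriv f z) \<le> 2 * (C * 2 powr \<alpha>) * N"
proof -
  define \<rho> where "\<rho> = (1 - norm z)/2"
  define s where "s = (1 + norm z)/2"
  define K where "K = C * 2 powr \<alpha>"
  have K: "K > 0" using C by (simp add: K_def)
  have z1: "norm z < 1" using z by simp
  have \<rho>: "\<rho> > 0" using z1 by (simp add: \<rho>_def)
  have s1: "s < 1" "0 \<le> s" using z1 by (auto simp: s_def)
  have sub: "cball z \<rho> \<subseteq> disc"
  proof
    fix w assume "w \<in> cball z \<rho>"
    then have "norm (w - z) \<le> \<rho>" by (simp add: dist_norm norm_minus_commute)
    moreover have "norm w \<le> norm z + norm (w - z)" by (metis norm_triangle_sub add.commute)
    ultimately have "norm w \<le> s" by (simp add: s_def \<rho>_def)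
    then show "w \<in> disc" using s1 by simp
  qed
  have vz: "\<nu> z > 0" using pos z by blast
  have dbl: "\<nu> z \<le> K * \<nu> (complex_of_real s)"
    using U_doubling[OF w pos a C U z] by (simp add: K_def s_def)
  have bnd: "norm (f w) \<le> K * N / \<nu> z" if wd: "norm (z - w) = \<rho>" for w
  proof -
    have "norm (w - z) \<le> \<rho>" using wd by (simp add: norm_minus_commute)
    moreover have "norm w \<le> norm z + norm (w - z)" by (metis norm_triangle_sub add.commute)
    ultimately have ws: "norm w \<le> s" by (simp add: s_def \<rho>_def)
    have wdisc: "w \<in> disc" using sub wd by (auto simp: dist_norm)
    have sd: "complex_of_real s \<in> disc" using s1 by simp
    have "\<nu> (complex_of_real s) \<le> \<nu> w"
      using weight_dec[OF w wdisc sd] ws s1 by simp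
    then have "\<nu> z \<le> K * \<nu> w" using dbl K by (meson mult_left_mono less_imp_le order_trans)
    then have "\<nu> z * norm (f w) \<le> K * \<nu> w * norm (f w)" by (simp add: mult_right_mono)
    also have "\<dots> \<le> K * N" using N[of w] wd K by (simp add: dist_norm \<rho>_def mult.assoc)
    finally show ?thesis using vz by (simp add: le_divide_eq mult.commute)
  qed
  have "norm ((deriv ^^ 1) f z) \<le> (fact 1) * (K * N / \<nu> z) / \<rho> ^ 1"
  proof (rule Cauchy_inequality)
    show "f holomorphic_on ball z \<rho>" using f sub ball_subset_cball by (blast intro: holomorphic_on_subset)
    show "continuous_on (cball z \<rho>) f" using f sub holomorphic_on_imp_continuous_on
      by (blast intro: holomorphic_on_subset)
  qed (use \<rho> bnd in auto)
  then have "norm (deriv f z) \<le> K * N / \<nu> z / \<rho>" by simp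
  then have "\<rho> * \<nu> z * norm (deriv f z) \<le> K * N"
    using \<rho> vz by (simp add: field_simps)
  then show ?thesis by (simp add: \<rho>_def K_def field_simps)
qed



definition fa :: "(complex \<Rightarrow> real) \<Rightarrow> nat \<Rightarrow> complex \<Rightarrow> complex \<Rightarrow> complex" where
  "fa \<nu> \<beta> a z = complex_of_real ((1 - (norm a)\<^sup>2) ^ \<beta> / \<nu> a) / (1 - cnj a * z) ^ \<beta>"

lemma fa_denom_ge: "a \<in> disc \<Longrightarrow> z \<in> disc \<Longrightarrow> norm (1 - cnj a * z) \<ge> 1 - norm a * norm z"
proof -
  have "norm (1::complex) \<le> norm (1 - cnj a * z) + norm (cnj a * z)"
    by (metis norm_triangle_ineq diff_add_cancel)
  then show ?thesis by (simp add: norm_mult)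
qed

lemma fa_denom: assumes "a \<in> disc" "z \<in> disc" shows "norm (1 - cnj a * z) > 0"
proof -
  have "norm a * norm z < 1" using assms
    by (metis mem_ball_0 mult_le_one norm_ge_zero less_eq_real_def mult_strict_mono' mult_1_right)
  then show ?thesis using fa_denom_ge[OF assms] by linarith
qed

lemma fa_deriv:
  assumes "1 - cnj a * z \<noteq> 0"
  shows "(fa \<nu> \<beta> a has_field_derivative
     (0 * (1 - cnj a * z) ^ \<beta> - complex_of_real ((1 - (norm a)\<^sup>2) ^ \<beta> / \<nu> a) * (of_nat \<beta> * ((0 - cnj a * 1) * (1 - cnj a * z) ^ (\<beta> - Suc 0))))
       / ((1 - cnj a * z) ^ \<beta> * (1 - cnj a * z) ^ \<beta>)) (at z)"
proof -
  have "fa \<nu> \<beta> a = (\<lambda>z. complex_of_real ((1 - (norm a)\<^sup>2) ^ \<beta> / \<nu> a) / (1 - cnj a * z) ^ \<beta>)"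
    by (rule ext) (simp add: fa_def)
  moreover have "((\<lambda>z. complex_of_real ((1 - (norm a)\<^sup>2) ^ \<beta> / \<nu> a) / (1 - cnj a * z) ^ \<beta>) has_field_derivative
     (0 * (1 - cnj a * z) ^ \<beta> - complex_of_real ((1 - (norm a)\<^sup>2) ^ \<beta> / \<nu> a) * (of_nat \<beta> * ((0 - cnj a * 1) * (1 - cnj a * z) ^ (\<beta> - Suc 0))))
       / ((1 - cnj a * z) ^ \<beta> * (1 - cnj a * z) ^ \<beta>)) (at z)"
    by (intro DERIV_divide DERIV_const DERIV_power DERIV_diff DERIV_cmult DERIV_ident) (use assms in simp)
  ultimately show ?thesis by simp
qed

lemma fa_deriv_norm:
  assumes a: "a \<in> disc" and va: "\<nu> a > 0"
  shows "norm (deriv (fa \<nu> (Suc m) a) a) = real (Suc m) * norm a / (\<nu> a * (1 - (norm a)\<^sup>2))"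
proof -
  define t where "t = 1 - (norm a)\<^sup>2"
  have t: "t > 0" using a by (simp add: t_def abs_square_less_1)
  have hn: "norm (1 + complex_of_nat m) = 1 + real m"
    by (metis norm_of_nat of_nat_Suc of_real_of_nat_eq)
  have c: "1 - (norm a)\<^sup>2 = t" by (simp add: t_def)
  have cn: "cnj a * a = complex_of_real ((norm a)\<^sup>2)" by (metis complex_norm_square mult.commute)
  have w: "1 - cnj a * a = complex_of_real t"
    by (simp only: t_def of_real_diff of_real_1 cn)
  have "(fa \<nu> (Suc m) a has_field_derivative
     (0 * (1 - cnj a * a) ^ Suc m - complex_of_real ((1 - (norm a)\<^sup>2) ^ Suc m / \<nu> a) * (of_nat (Suc m) * ((0 - cnj a * 1) * (1 - cnj a * a) ^ (Suc m - Suc 0))))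
       / ((1 - cnj a * a) ^ Suc m * (1 - cnj a * a) ^ Suc m)) (at a)"
    using t w by (intro fa_deriv) simp
  then have "deriv (fa \<nu> (Suc m) a) a = (0 * (1 - cnj a * a) ^ Suc m - complex_of_real ((1 - (norm a)\<^sup>2) ^ Suc m / \<nu> a) * (of_nat (Suc m) * ((0 - cnj a * 1) * (1 - cnj a * a) ^ (Suc m - Suc 0))))
       / ((1 - cnj a * a) ^ Suc m * (1 - cnj a * a) ^ Suc m)"
    by (rule DERIV_imp_deriv)
  also have "\<dots> = (complex_of_real (t ^ Suc m / \<nu> a) * of_nat (Suc m) * cnj a * complex_of_real t ^ m)
       / (complex_of_real t ^ Suc m * complex_of_real t ^ Suc m)"
    unfolding w c by simp
  finally have "norm (deriv (fa \<nu> (Suc m) a) a) = (t ^ Suc m / \<nu> a) * real (Suc m) * norm a * t ^ m / (t ^ Suc m * t ^ Suc m)"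
    using t va hn by (simp add: norm_mult norm_divide norm_power)
  also have "\<dots> = real (Suc m) * norm a / (\<nu> a * t)"
    using t va by (simp add: field_simps)
  finally show ?thesis by (simp add: t_def)
qed



lemma real_bound:
  fixes t V q C \<alpha> :: real and \<beta> :: nat
  assumes t: "0 < t" "t \<le> 1" and V: "0 \<le> V" "V \<le> C * (1/t) powr \<alpha>"
    and q: "0 \<le> q" "q \<le> 2 * t" and ab: "\<alpha> \<le> real \<beta>" and C: "C > 0"
  shows "V * q ^ \<beta> \<le> C * 2 ^ \<beta>"
proof -
  have "V * q ^ \<beta> \<le> (C * (1/t) powr \<alpha>) * (2 * t) ^ \<beta>"
    using V q by (intro mult_mono power_mono) auto
  also have "(1/t) powr \<alpha> * t ^ \<beta> = t powr (real \<beta> - \<alpha>)"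
    using t by (simp add: powr_diff powr_realpow powr_divide)
  then have "(C * (1/t) powr \<alpha>) * (2 * t) ^ \<beta> = C * 2 ^ \<beta> * t powr (real \<beta> - \<alpha>)"
    by (simp add: power_mult_distrib mult_ac)
  also have "\<dots> \<le> C * 2 ^ \<beta> * 1"
    using t ab C by (intro mult_left_mono powr_le1) auto
  finally show ?thesis by simp
qed

lemma q_bound1:
  fixes a z d :: real
  assumes "0 \<le> a" "a < 1" "d \<ge> 1 - a"
  shows "(1 - a\<^sup>2) / d \<le> 2" "0 \<le> (1 - a\<^sup>2) / d"
proof -
  have d: "d > 0" using assms by linarith
  have "1 - a\<^sup>2 = (1 - a) * (1 + a)" by (simp add: power2_eq_square algebra_simps)
  also have "\<dots> \<le> d * 2" using assms by (intro mult_mono) auto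
  finally show "(1 - a\<^sup>2) / d \<le> 2" using d by (simp add: divide_le_eq)
  have "a * a \<le> 1" using assms by (smt (verit) mult_left_le)
  then show "0 \<le> (1 - a\<^sup>2) / d" using d by (simp add: power2_eq_square)
qed

lemma q_bound2:
  fixes a z d :: real
  assumes "0 \<le> z" "z \<le> a" "a < 1" "d \<ge> 1 - z"
  shows "(1 - a\<^sup>2) / d \<le> 2 * ((1 - a\<^sup>2) / (1 - z\<^sup>2))"
proof -
  have za: "z * z < 1" using assms by (smt (verit) mult_left_le)
  have aa: "a * a \<le> 1" using assms by (smt (verit) mult_left_le)
  have z2: "1 - z\<^sup>2 > 0" using za by (simp add: power2_eq_square)
  have A: "0 \<le> 1 - a\<^sup>2" using aa by (simp add: power2_eq_square)
  have "1 - z\<^sup>2 = (1 - z) * (1 + z)" by (simp add: power2_eq_square algebra_simps)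
  also have "\<dots> \<le> (1 - z) * 2" using assms by (intro mult_left_mono) auto
  finally have "(1 - z\<^sup>2) / 2 \<le> d" using assms by simp
  then have "(1 - a\<^sup>2) / d \<le> (1 - a\<^sup>2) / ((1 - z\<^sup>2) / 2)"
    using z2 A by (intro frac_le) auto
  then show ?thesis by (simp add: mult.commute)
qed


lemma fa_bound:
  assumes w: "is_weight \<nu>" and pos: "\<forall>z\<in>disc. \<nu> z > 0"
    and a: "\<alpha> > 0" and C: "C > 0"
    and U: "\<forall>r s. 0 \<le> r \<and> r \<le> s \<and> s < 1 \<longrightarrow>
      \<nu> (complex_of_real r) / (1 - r\<^sup>2) powr \<alpha> \<le> C * (\<nu> (complex_of_real s) / (1 - s\<^sup>2) powr \<alpha>)"
    and ab: "\<alpha> \<le> real \<beta>" and az: "a \<in> disc" and z: "z \<in> disc"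
  shows "\<nu> z * norm (fa \<nu> \<beta> a z) \<le> (C + 1) * 2 ^ \<beta>"
proof -
  define d where "d = norm (1 - cnj a * z)"
  define A where "A = 1 - (norm a)\<^sup>2"
  have a1: "norm a < 1" and z1: "norm z < 1" using az z by auto
  have dge: "d \<ge> 1 - norm a * norm z" using fa_denom_ge[OF az z] by (simp add: d_def)
  have d0: "d > 0" using fa_denom[OF az z] by (simp add: d_def)
  have va: "\<nu> a > 0" using pos az by blast
  have vz: "\<nu> z \<ge> 0" using pos z less_imp_le by blast
  have A0: "A > 0" using a1 by (simp add: A_def abs_square_less_1)
  have "norm (fa \<nu> \<beta> a z) = norm (complex_of_real (A ^ \<beta> / \<nu> a)) / d ^ \<beta>"
    by (simp only: fa_def A_def d_def norm_divide norm_power)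
  also have "norm (complex_of_real (A ^ \<beta> / \<nu> a)) = A ^ \<beta> / \<nu> a"
    using A0 va by (simp only: norm_of_real) simp
  finally have "norm (fa \<nu> \<beta> a z) = A ^ \<beta> / \<nu> a / d ^ \<beta>" .
  then have eq: "\<nu> z * norm (fa \<nu> \<beta> a z) = (\<nu> z / \<nu> a) * (A / d) ^ \<beta>"
    by (simp add: power_divide)
  show ?thesis
  proof (cases "norm a \<le> norm z")
    case True
    have V: "\<nu> z / \<nu> a \<le> 1" using weight_dec[OF w az z True] va by simp
    have "norm a * norm z \<le> norm a" using z1 by (simp add: mult_left_le)
    then have "d \<ge> 1 - norm a" using dge by linarith
    then have q: "A / d \<le> 2" "0 \<le> A / d" using q_bound1[of "norm a" d] a1 by (auto simp: A_def)
    have "(\<nu> z / \<nu> a) * (A / d) ^ \<beta> \<le> 1 * 2 ^ \<beta>"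
      using V q vz va by (intro mult_mono power_mono) auto
    also have "\<dots> \<le> (C + 1) * 2 ^ \<beta>" using C by simp
    finally show ?thesis using eq by simp
  next
    case False
    then have za: "norm z \<le> norm a" by simp
    define B where "B = 1 - (norm z)\<^sup>2"
    have B0: "B > 0" using z1 by (simp add: B_def abs_square_less_1)
    have AB: "A \<le> B" using za by (simp add: A_def B_def power_mono)
    define t where "t = A / B"
    have t: "0 < t" "t \<le> 1" using A0 B0 AB by (auto simp: t_def)
    have "\<nu> (complex_of_real (norm z)) / B powr \<alpha> \<le> C * (\<nu> (complex_of_real (norm a)) / A powr \<alpha>)"
      using U za a1 by (simp add: A_def B_def)
    then have "\<nu> z / B powr \<alpha> \<le> C * (\<nu> a / A powr \<alpha>)"
      using weight_radial[OF w z] weight_radial[OF w az] by simp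
    then have "\<nu> z \<le> C * \<nu> a * (B powr \<alpha> / A powr \<alpha>)"
      using A0 B0 by (intro aux1) auto
    also have "B powr \<alpha> / A powr \<alpha> = (1 / t) powr \<alpha>"
      using A0 B0 by (simp add: t_def powr_divide)
    finally have "\<nu> z \<le> C * \<nu> a * (1 / t) powr \<alpha>" .
    then have V: "\<nu> z / \<nu> a \<le> C * (1 / t) powr \<alpha>"
      using va by (simp add: divide_le_eq mult_ac)
    have "norm a * norm z \<le> norm z" using a1 by (simp add: mult_left_le_one_le)
    then have "d \<ge> 1 - norm z" using dge by linarith
    then have q2: "A / d \<le> 2 * t"
      using q_bound2[of "norm z" "norm a" d] za a1 by (simp add: A_def B_def t_def)
    have q0: "0 \<le> A / d" using A0 d0 by simp
    have "(\<nu> z / \<nu> a) * (A / d) ^ \<beta> \<le> C * 2 ^ \<beta>"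
      using real_bound[OF t _ V q0 q2 ab C] vz va by simp
    also have "\<dots> \<le> (C + 1) * 2 ^ \<beta>" by simp
    finally show ?thesis using eq by simp
  qed
qed


lemma fa_holo:
  assumes az: "a \<in> disc" shows "fa \<nu> \<beta> a holomorphic_on disc"
  unfolding holomorphic_on_def field_differentiable_def
proof
  fix z assume z: "z \<in> disc"
  have "1 - cnj a * z \<noteq> 0" using fa_denom[OF az z] by auto
  then show "\<exists>f'. (fa \<nu> \<beta> a has_field_derivative f') (at z within disc)"
    using fa_deriv has_field_derivative_at_within by meson
qed

lemma test_ineq:
  assumes g: "g holomorphic_on disc"
    and C0: "\<forall>f\<in>X. B_norm \<mu> (S_op g f) \<le> C0 * H_norm \<nu> f" and SY: "\<forall>f\<in>X. S_op g f \<in> Y"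
    and Ybdd: "\<forall>h\<in>Y. bdd_above ((\<lambda>z. \<mu> z * norm (deriv h z)) ` disc)"
    and fX: "f \<in> X" and fh: "f holomorphic_on disc"
    and L: "\<forall>w\<in>disc. \<nu> w * norm (f w) \<le> L" and nn: "\<forall>w\<in>disc. 0 \<le> \<nu> w"
    and z: "z \<in> disc"
  shows "\<mu> z * norm (deriv f z * g z) \<le> max C0 0 * L"
proof -
  have ne: "disc \<noteq> {}" by (metis centre_in_ball empty_iff zero_less_one)
  have bdd: "bdd_above ((\<lambda>z. \<nu> z * norm (f z)) ` disc)" using L by (intro bdd_aboveI2) auto
  have HL: "H_norm \<nu> f \<le> L" unfolding H_norm_def using L ne by (intro cSUP_least) auto
  have "0 \<le> \<nu> 0 * norm (f 0)" using nn by simp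
  also have "\<dots> \<le> H_norm \<nu> f" unfolding H_norm_def using bdd by (intro cSUP_upper) auto
  finally have H0: "0 \<le> H_norm \<nu> f" .
  have bdY: "bdd_above ((\<lambda>z. \<mu> z * norm (deriv (S_op g f) z)) ` disc)" using bspec[OF Ybdd bspec[OF SY fX]] .
  have "\<mu> z * norm (deriv f z * g z) = \<mu> z * norm (deriv (S_op g f) z)"
    using S_op_deriv_eq[OF fh g z] by simp
  also have "\<dots> \<le> (SUP z\<in>disc. \<mu> z * norm (deriv (S_op g f) z))"
    using bdY z by (intro cSUP_upper) auto
  also have "\<dots> \<le> B_norm \<mu> (S_op g f)" unfolding B_norm_def by simp
  also have "\<dots> \<le> C0 * H_norm \<nu> f" using C0 fX by blast
  also have "\<dots> \<le> max C0 0 * H_norm \<nu> f" using H0 by (intro mult_right_mono) auto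
  also have "\<dots> \<le> max C0 0 * L" using HL by (intro mult_left_mono) auto
  finally show ?thesis .
qed


lemma nec:
  assumes w: "is_weight \<nu>" and pos: "\<forall>z\<in>disc. \<nu> z > 0"
    and a: "\<alpha> > 0" and C: "C > 0"
    and U: "\<forall>r s. 0 \<le> r \<and> r \<le> s \<and> s < 1 \<longrightarrow>
      \<nu> (complex_of_real r) / (1 - r\<^sup>2) powr \<alpha> \<le> C * (\<nu> (complex_of_real s) / (1 - s\<^sup>2) powr \<alpha>)"
    and mu: "is_weight \<mu>" and g: "g holomorphic_on disc" and ab: "\<alpha> \<le> real (Suc m)"
    and bo: "bounded_op (S_op g) X (H_norm \<nu>) Y (B_norm \<mu>)"
    and Ybdd: "\<forall>h\<in>Y. bdd_above ((\<lambda>z. \<mu> z * norm (deriv h z)) ` disc)"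
    and Xfa: "\<forall>a\<in>disc. fa \<nu> (Suc m) a \<in> X" and Xid: "(\<lambda>z. z) \<in> X"
  shows "bdd_above ((\<lambda>z. \<mu> z / ((1 - (norm z)\<^sup>2) * \<nu> z) * norm (g z)) ` disc)"
proof -
  from bo obtain C0 where C0: "\<forall>f\<in>X. B_norm \<mu> (S_op g f) \<le> C0 * H_norm \<nu> f"
    and SY: "\<forall>f\<in>X. S_op g f \<in> Y" unfolding bounded_op_def by blast
  define C1 where "C1 = max C0 0"
  have C1: "C1 \<ge> 0" by (simp add: C1_def)
  have nn: "\<forall>w\<in>disc. 0 \<le> \<nu> w" using pos less_imp_le by blast
  define L1 where "L1 = (C + 1) * 2 ^ Suc m"
  define h where "h = complex_of_real (1/2)"
  have hd: "h \<in> disc" by (simp add: h_def)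
  have vh: "\<nu> h > 0" using pos hd by blast
  have d0: "(0::complex) \<in> disc" by simp
  define Mb where "Mb = max (2 * (C1 * L1)) (C1 * \<nu> 0 / (3/4 * \<nu> h))"
  show ?thesis
  proof (rule bdd_aboveI2)
    fix a assume az: "a \<in> disc"
    have va: "\<nu> a > 0" using pos az by blast
    have mua: "\<mu> a \<ge> 0" using weight_nonneg[OF mu az] .
    have a1: "norm a < 1" using az by simp
    have A0: "1 - (norm a)\<^sup>2 > 0" using a1 by (simp add: abs_square_less_1)
    define M where "M = \<mu> a / ((1 - (norm a)\<^sup>2) * \<nu> a) * norm (g a)"
    have M0: "M \<ge> 0" using mua va A0 by (simp add: M_def)
    show "\<mu> a / ((1 - (norm a)\<^sup>2) * \<nu> a) * norm (g a) \<le> Mb"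
    proof (cases "norm a \<ge> 1/2")
      case True
      have "\<mu> a * norm (deriv (fa \<nu> (Suc m) a) a * g a) \<le> C1 * L1"
        unfolding C1_def L1_def
      proof (rule test_ineq[OF g C0 SY Ybdd])
        show "fa \<nu> (Suc m) a \<in> X" using Xfa az by blast
        show "fa \<nu> (Suc m) a holomorphic_on disc" using fa_holo[OF az] .
        show "\<forall>w\<in>disc. \<nu> w * norm (fa \<nu> (Suc m) a w) \<le> (C + 1) * 2 ^ Suc m"
          using fa_bound[OF w pos a C U ab az] by blast
      qed (use nn az in auto)
      also have "\<mu> a * norm (deriv (fa \<nu> (Suc m) a) a * g a) = M * (real (Suc m) * norm a)"
        using fa_deriv_norm[of a \<nu> m, OF az va] va A0 by (simp add: M_def norm_mult field_simps)
      finally have 1: "M * (real (Suc m) * norm a) \<le> C1 * L1" .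
      have "M * (1/2) \<le> M * (real (Suc m) * norm a)"
      proof (intro mult_left_mono M0)
        have "1 * norm a \<le> real (Suc m) * norm a" by (intro mult_right_mono) auto
        then show "1/2 \<le> real (Suc m) * norm a" using True by linarith
      qed
      then have "M \<le> 2 * (C1 * L1)" using 1 by linarith
      then show ?thesis unfolding M_def Mb_def by linarith
    next
      case False
      have "\<mu> a * norm (deriv (\<lambda>z. z) a * g a) \<le> C1 * \<nu> 0"
        unfolding C1_def
      proof (rule test_ineq[OF g C0 SY Ybdd Xid])
        show "(\<lambda>z. z) holomorphic_on disc" by simp
        show "\<forall>w\<in>disc. \<nu> w * norm w \<le> \<nu> 0"
        proof
          fix w :: complex assume wd: "w \<in> disc"
          have "\<nu> w * norm w \<le> \<nu> w * 1" using wd nn by (intro mult_left_mono) auto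
          also have "\<dots> \<le> \<nu> 0" using weight_dec[OF w d0 wd] by simp
          finally show "\<nu> w * norm w \<le> \<nu> 0" .
        qed
      qed (use nn az in auto)
      then have 1: "\<mu> a * norm (g a) \<le> C1 * \<nu> 0" by simp
      have "\<nu> h \<le> \<nu> a" using weight_dec[OF w az hd] False by (simp add: h_def)
      moreover have "3/4 \<le> 1 - (norm a)\<^sup>2"
      proof -
        have "(norm a)\<^sup>2 \<le> (1/2)\<^sup>2" using False by (intro power_mono) auto
        then show ?thesis by (simp add: power2_eq_square)
      qed
      ultimately have den: "3/4 * \<nu> h \<le> (1 - (norm a)\<^sup>2) * \<nu> a"
        using vh by (intro mult_mono) auto
      have "M = \<mu> a * norm (g a) / ((1 - (norm a)\<^sup>2) * \<nu> a)" by (simp add: M_def)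
      also have "\<dots> \<le> C1 * \<nu> 0 / (3/4 * \<nu> h)"
        using 1 den vh mua C1 nn by (intro frac_le) auto
      finally show ?thesis unfolding M_def Mb_def by linarith
    qed
  qed
qed


lemma key_pt:
  assumes z: "z \<in> disc" and vz: "\<nu> z > 0" and mz: "\<mu> z \<ge> 0"
    and MB: "\<mu> z / ((1 - (norm z)\<^sup>2) * \<nu> z) * norm (g z) \<le> B"
    and L: "(1 - norm z) * \<nu> z * norm (deriv f z) \<le> L"
  shows "\<mu> z * norm (deriv f z * g z) \<le> B * (2 * L)"
proof -
  define P where "P = (1 - (norm z)\<^sup>2) * \<nu> z"
  define M where "M = \<mu> z / ((1 - (norm z)\<^sup>2) * \<nu> z) * norm (g z)"
  have z1: "norm z < 1" using z by simp
  have P0: "P > 0" using z1 vz by (simp add: P_def abs_square_less_1)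
  have M0: "M \<ge> 0" using P0 mz by (simp add: M_def P_def)
  have M': "M = \<mu> z / P * norm (g z)" by (simp add: M_def P_def)
  have MP: "M * P = \<mu> z * norm (g z)" using P0 unfolding M' by simp
  have "M * (P * norm (deriv f z)) = (M * P) * norm (deriv f z)" by (simp add: mult.assoc)
  also have "\<dots> = \<mu> z * norm (deriv f z * g z)" unfolding MP by (simp add: norm_mult mult_ac)
  finally have eq: "\<mu> z * norm (deriv f z * g z) = M * (P * norm (deriv f z))" by simp
  have "1 - (norm z)\<^sup>2 \<le> 2 * (1 - norm z)"
  proof -
    have "1 - (norm z)\<^sup>2 = (1 - norm z) * (1 + norm z)" by (simp add: power2_eq_square algebra_simps)
    also have "\<dots> \<le> (1 - norm z) * 2" using z1 by (intro mult_left_mono) auto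
    finally show ?thesis by simp
  qed
  then have "(1 - (norm z)\<^sup>2) * norm (deriv f z) \<le> (2 * (1 - norm z)) * norm (deriv f z)"
    by (rule mult_right_mono) simp
  then have "\<nu> z * ((1 - (norm z)\<^sup>2) * norm (deriv f z)) \<le> \<nu> z * ((2 * (1 - norm z)) * norm (deriv f z))"
    using vz by (intro mult_left_mono) auto
  also have "\<nu> z * ((2 * (1 - norm z)) * norm (deriv f z)) = 2 * ((1 - norm z) * \<nu> z * norm (deriv f z))"
    by (simp only: mult_ac)
  finally have "P * norm (deriv f z) \<le> 2 * ((1 - norm z) * \<nu> z * norm (deriv f z))"
    unfolding P_def by (simp only: mult_ac)
  also have "\<dots> \<le> 2 * L" using L by simp
  finally have 1: "P * norm (deriv f z) \<le> 2 * L" .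
  have MB': "M \<le> B" using MB by (simp add: M_def)
  have "M * (P * norm (deriv f z)) \<le> B * (2 * L)"
    by (rule mult_mono[OF MB' 1]) (use M0 MB' P0 in auto)
  then show ?thesis using eq by simp
qed

lemma circle_disc:
  assumes z: "z \<in> disc" and d: "dist z w = (1 - norm z)/2"
  shows "w \<in> disc" "norm w \<ge> norm z - (1 - norm z)/2"
proof -
  have "norm w \<le> norm z + norm (w - z)" by (metis norm_triangle_sub add.commute)
  moreover have "norm (w - z) = (1 - norm z)/2" using d by (simp add: dist_norm norm_minus_commute)
  moreover have "norm z < 1" using z by simp
  ultimately have "norm w < 1" by (simp add: field_simps)
  then show "w \<in> disc" by simp
  have "norm z \<le> norm w + norm (z - w)" by (metis norm_triangle_sub add.commute)
  then show "norm w \<ge> norm z - (1 - norm z)/2" using d by (simp add: dist_norm field_simps)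
qed

lemma suff_pt:
  assumes w: "is_weight \<nu>" and pos: "\<forall>z\<in>disc. \<nu> z > 0"
    and a: "\<alpha> > 0" and C: "C > 0"
    and U: "\<forall>r s. 0 \<le> r \<and> r \<le> s \<and> s < 1 \<longrightarrow>
      \<nu> (complex_of_real r) / (1 - r\<^sup>2) powr \<alpha> \<le> C * (\<nu> (complex_of_real s) / (1 - s\<^sup>2) powr \<alpha>)"
    and mu: "is_weight \<mu>" and g: "g holomorphic_on disc"
    and Bd: "\<forall>z\<in>disc. \<mu> z / ((1 - (norm z)\<^sup>2) * \<nu> z) * norm (g z) \<le> B"
    and f: "f holomorphic_on disc" and z: "z \<in> disc"
    and N: "\<And>w. dist z w = (1 - norm z)/2 \<Longrightarrow> \<nu> w * norm (f w) \<le> N"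
  shows "\<mu> z * norm (deriv (S_op g f) z) \<le> B * (2 * (2 * (C * 2 powr \<alpha>) * N))"
proof -
  have "(1 - norm z) * \<nu> z * norm (deriv f z) \<le> 2 * (C * 2 powr \<alpha>) * N"
    using cauchy_est[OF w pos a C U f z N] .
  then have "\<mu> z * norm (deriv f z * g z) \<le> B * (2 * (2 * (C * 2 powr \<alpha>) * N))"
    using z pos weight_nonneg[OF mu z] Bd by (intro key_pt) auto
  then show ?thesis using S_op_deriv_eq[OF f g z] by simp
qed

lemma lim0_bdd:
  assumes c: "continuous_on disc h" and l: "radial_lim0 h"
  shows "\<exists>N. \<forall>z\<in>disc. h z \<le> N"
proof -
  obtain r where r: "r < 1" and rr: "\<forall>z. r < norm z \<and> norm z < 1 \<longrightarrow> \<bar>h z\<bar> < 1"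
    using l unfolding radial_lim0_def by (meson zero_less_one)
  define r1 where "r1 = max r 0"
  have r1: "r1 < 1" "r1 \<ge> 0" "r \<le> r1" using r by (auto simp: r1_def)
  have sub: "cball 0 r1 \<subseteq> disc" using r1 by auto
  have "compact (h ` cball 0 r1)"
    using c sub by (intro compact_continuous_image) (auto intro: continuous_on_subset)
  then obtain b where b: "\<forall>x\<in>h ` cball 0 r1. norm x \<le> b" using compact_imp_bounded bounded_iff by metis
  have "\<forall>z\<in>disc. h z \<le> max b 1"
  proof
    fix z :: complex assume zd: "z \<in> disc"
    show "h z \<le> max b 1"
    proof (cases "norm z \<le> r1")
      case True
      then have "norm (h z) \<le> b" using b by auto
      then show ?thesis by auto
    next
      case False
      then have "\<bar>h z\<bar> < 1" using rr zd r1 by auto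
      then show ?thesis by auto
    qed
  qed
  then show ?thesis by blast
qed

lemma lim0_times_bdd:
  assumes l: "radial_lim0 \<nu>" and nn: "\<forall>z\<in>disc. 0 \<le> \<nu> z"
    and Q: "\<forall>z\<in>disc. norm (f z) \<le> Q"
  shows "radial_lim0 (\<lambda>z. \<nu> z * norm (f z))"
  unfolding radial_lim0_def
proof (intro allI impI)
  fix e :: real assume e: "e > 0"
  define Q1 where "Q1 = max Q 0 + 1"
  have Q1: "Q1 > 0" by (simp add: Q1_def add_nonneg_pos)
  obtain r where r: "r < 1" and rr: "\<forall>z. r < norm z \<and> norm z < 1 \<longrightarrow> \<bar>\<nu> z\<bar> < e / Q1"
    using l e Q1 unfolding radial_lim0_def by (meson divide_pos_pos)
  have "\<forall>z. r < norm z \<and> norm z < 1 \<longrightarrow> \<bar>\<nu> z * norm (f z)\<bar> < e"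
  proof (intro allI impI)
    fix z :: complex assume zz: "r < norm z \<and> norm z < 1"
    then have zd: "z \<in> disc" by simp
    have v: "0 \<le> \<nu> z" "\<nu> z < e / Q1" using nn zd rr zz by auto
    have fq: "norm (f z) < Q1" using Q zd by (fastforce simp: Q1_def)
    have "\<bar>\<nu> z * norm (f z)\<bar> = \<nu> z * norm (f z)" using v by simp
    also have "\<dots> \<le> (e / Q1) * norm (f z)" using v by (intro mult_right_mono) auto
    also have "\<dots> \<le> (e / Q1) * Q1" using fq e Q1 by (intro mult_left_mono) auto
    also have "\<dots> = e" using Q1 by simp
    finally have "\<bar>\<nu> z * norm (f z)\<bar> \<le> e" .
    show "\<bar>\<nu> z * norm (f z)\<bar> < e"
    proof (cases "norm (f z) = 0")
      case True then show ?thesis using e by simp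
    next
      case False
      then have "norm (f z) > 0" by simp
      then have "\<nu> z * norm (f z) < (e / Q1) * Q1"
        using v fq e Q1 by (intro mult_strict_mono') auto
      then show ?thesis using v Q1 by simp
    qed
  qed
  then show "\<exists>r<1. \<forall>z. r < norm z \<and> norm z < 1 \<longrightarrow> \<bar>\<nu> z * norm (f z)\<bar> < e" using r by blast
qed


lemma suff_core:
  assumes w: "is_weight \<nu>" and pos: "\<forall>z\<in>disc. \<nu> z > 0"
    and a: "\<alpha> > 0" and C: "C > 0"
    and U: "\<forall>r s. 0 \<le> r \<and> r \<le> s \<and> s < 1 \<longrightarrow>
      \<nu> (complex_of_real r) / (1 - r\<^sup>2) powr \<alpha> \<le> C * (\<nu> (complex_of_real s) / (1 - s\<^sup>2) powr \<alpha>)"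
    and mu: "is_weight \<mu>" and g: "g holomorphic_on disc"
    and Bd: "\<forall>z\<in>disc. \<mu> z / ((1 - (norm z)\<^sup>2) * \<nu> z) * norm (g z) \<le> B"
    and f: "f holomorphic_on disc" and fb: "\<forall>w\<in>disc. \<nu> w * norm (f w) \<le> N"
  shows "bdd_above ((\<lambda>z. \<mu> z * norm (deriv (S_op g f) z)) ` disc)"
    and "B_norm \<mu> (S_op g f) \<le> B * (2 * (2 * (C * 2 powr \<alpha>) * N))"
proof -
  have pt: "\<mu> z * norm (deriv (S_op g f) z) \<le> B * (2 * (2 * (C * 2 powr \<alpha>) * N))" if z: "z \<in> disc" for z
  proof (rule suff_pt[OF w pos a C U mu g Bd f z])
    fix w assume "dist z w = (1 - norm z)/2"
    then have "w \<in> disc" using circle_disc[OF z] by blast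
    then show "\<nu> w * norm (f w) \<le> N" using fb by blast
  qed
  then show "bdd_above ((\<lambda>z. \<mu> z * norm (deriv (S_op g f) z)) ` disc)"
    by (intro bdd_aboveI2) auto
  have ne: "disc \<noteq> {}" by (metis centre_in_ball empty_iff zero_less_one)
  have "(SUP z\<in>disc. \<mu> z * norm (deriv (S_op g f) z)) \<le> B * (2 * (2 * (C * 2 powr \<alpha>) * N))"
    using pt ne by (intro cSUP_least) auto
  then show "B_norm \<mu> (S_op g f) \<le> B * (2 * (2 * (C * 2 powr \<alpha>) * N))"
    by (simp add: B_norm_def S_op_0)
qed

lemma suff_Hinf:
  assumes w: "is_weight \<nu>" and pos: "\<forall>z\<in>disc. \<nu> z > 0"
    and a: "\<alpha> > 0" and C: "C > 0"
    and U: "\<forall>r s. 0 \<le> r \<and> r \<le> s \<and> s < 1 \<longrightarrow>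
      \<nu> (complex_of_real r) / (1 - r\<^sup>2) powr \<alpha> \<le> C * (\<nu> (complex_of_real s) / (1 - s\<^sup>2) powr \<alpha>)"
    and mu: "is_weight \<mu>" and g: "g holomorphic_on disc"
    and bdd: "bdd_above ((\<lambda>z. \<mu> z / ((1 - (norm z)\<^sup>2) * \<nu> z) * norm (g z)) ` disc)"
  shows "bounded_op (S_op g) (Hinf \<nu>) (H_norm \<nu>) (Binf \<mu>) (B_norm \<mu>)"
proof -
  obtain B where Bd: "\<forall>z\<in>disc. \<mu> z / ((1 - (norm z)\<^sup>2) * \<nu> z) * norm (g z) \<le> B"
    using bdd by (auto simp: bdd_above_def)
  have *: "S_op g f \<in> Binf \<mu> \<and> B_norm \<mu> (S_op g f) \<le> (B * (2 * (2 * (C * 2 powr \<alpha>)))) * H_norm \<nu> f"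
    if fH: "f \<in> Hinf \<nu>" for f
  proof -
    have f: "f holomorphic_on disc" and bf: "bdd_above ((\<lambda>z. \<nu> z * norm (f z)) ` disc)"
      using fH by (auto simp: Hinf_def)
    have fb: "\<forall>w\<in>disc. \<nu> w * norm (f w) \<le> H_norm \<nu> f"
      unfolding H_norm_def using bf by (auto intro: cSUP_upper)
    note sc = suff_core[OF w pos a C U mu g Bd f fb]
    show ?thesis
      using sc S_op_holo[OF f g] by (auto simp: Binf_def mult_ac)
  qed
  then show ?thesis unfolding bounded_op_def by blast
qed

lemma suff_B0:
  assumes w: "is_weight \<nu>" and pos: "\<forall>z\<in>disc. \<nu> z > 0"
    and a: "\<alpha> > 0" and C: "C > 0"
    and U: "\<forall>r s. 0 \<le> r \<and> r \<le> s \<and> s < 1 \<longrightarrow>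
      \<nu> (complex_of_real r) / (1 - r\<^sup>2) powr \<alpha> \<le> C * (\<nu> (complex_of_real s) / (1 - s\<^sup>2) powr \<alpha>)"
    and mu: "is_weight \<mu>" and g: "g holomorphic_on disc"
    and Bd: "\<forall>z\<in>disc. \<mu> z / ((1 - (norm z)\<^sup>2) * \<nu> z) * norm (g z) \<le> B"
    and f: "f holomorphic_on disc" and lim: "radial_lim0 (\<lambda>z. \<nu> z * norm (f z))"
  shows "radial_lim0 (\<lambda>z. \<mu> z * norm (deriv (S_op g f) z))"
  unfolding radial_lim0_def
proof (intro allI impI)
  fix e :: real assume e: "e > 0"
  define B1 where "B1 = max B 0"
  define K where "K = C * 2 powr \<alpha>"
  have K: "K > 0" using C by (simp add: K_def)
  have B1: "B1 \<ge> 0" by (simp add: B1_def)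
  have Bd1: "\<forall>z\<in>disc. \<mu> z / ((1 - (norm z)\<^sup>2) * \<nu> z) * norm (g z) \<le> B1"
    using Bd by (force simp: B1_def)
  define e' where "e' = e / (2 * (4 * B1 * K + 1))"
  have den: "2 * (4 * B1 * K + 1) > 0" using B1 K by (simp add: add_nonneg_pos)
  have e': "e' > 0" using e den by (simp add: e'_def)
  have ee: "e' * (2 * (4 * B1 * K + 1)) = e" using den by (simp add: e'_def)
  obtain r0 where r0: "r0 < 1" and rr: "\<forall>w. r0 < norm w \<and> norm w < 1 \<longrightarrow> \<bar>\<nu> w * norm (f w)\<bar> < e'"
    using lim e' unfolding radial_lim0_def by blast
  define r1 where "r1 = max r0 0"
  have r1: "r1 < 1" "r1 \<ge> 0" "r0 \<le> r1" using r0 by (auto simp: r1_def)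
  define r where "r = (1 + 2 * r1) / 3"
  have r: "r < 1" using r1 by (simp add: r_def)
  have "\<forall>z. r < norm z \<and> norm z < 1 \<longrightarrow> \<bar>\<mu> z * norm (deriv (S_op g f) z)\<bar> < e"
  proof (intro allI impI)
    fix z :: complex assume zz: "r < norm z \<and> norm z < 1"
    then have z: "z \<in> disc" by simp
    have "\<mu> z * norm (deriv (S_op g f) z) \<le> B1 * (2 * (2 * K * e'))"
      unfolding K_def
    proof (rule suff_pt[OF w pos a C U mu g Bd1 f z])
      fix w assume d: "dist z w = (1 - norm z)/2"
      have wd: "w \<in> disc" and wn: "norm w \<ge> norm z - (1 - norm z)/2" using circle_disc[OF z d] by auto
      have "norm z - (1 - norm z)/2 > r1" using zz by (simp add: r_def field_simps)
      then have "r0 < norm w" using wn r1 by linarith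
      moreover have "norm w < 1" using wd by simp
      ultimately have "\<bar>\<nu> w * norm (f w)\<bar> < e'" using rr by blast
      then show "\<nu> w * norm (f w) \<le> e'" by simp
    qed
    also have "\<dots> = e' * (4 * B1 * K)" by (simp add: mult_ac)
    also have "\<dots> < e' * (2 * (4 * B1 * K + 1))"
    proof (intro mult_strict_left_mono e')
      have "0 \<le> B1 * K" using B1 K by simp
      then show "4 * B1 * K < 2 * (4 * B1 * K + 1)" by simp
    qed
    also have "\<dots> = e" by (rule ee)
    finally have 1: "\<mu> z * norm (deriv (S_op g f) z) < e" .
    have "0 \<le> \<mu> z * norm (deriv (S_op g f) z)" using weight_nonneg[OF mu z] by simp
    then show "\<bar>\<mu> z * norm (deriv (S_op g f) z)\<bar> < e" using 1 by simp
  qed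
  then show "\<exists>r<1. \<forall>z. r < norm z \<and> norm z < 1 \<longrightarrow> \<bar>\<mu> z * norm (deriv (S_op g f) z)\<bar> < e"
    using r by blast
qed


lemma weight_cont: "is_weight \<nu> \<Longrightarrow> continuous_on disc \<nu>"
  unfolding is_weight_def by blast

lemma H0_bdd:
  assumes w: "is_weight \<nu>" and f: "f holomorphic_on disc" and l: "radial_lim0 (\<lambda>z. \<nu> z * norm (f z))"
  shows "\<exists>N. \<forall>z\<in>disc. \<nu> z * norm (f z) \<le> N"
proof (rule lim0_bdd[OF _ l])
  show "continuous_on disc (\<lambda>z. \<nu> z * norm (f z))"
    using weight_cont[OF w] holomorphic_on_imp_continuous_on[OF f]
    by (intro continuous_on_mult continuous_on_norm) auto
qed

lemma B0_bdd:
  assumes mu: "is_weight \<mu>" and h: "h \<in> B0 \<mu>"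
  shows "bdd_above ((\<lambda>z. \<mu> z * norm (deriv h z)) ` disc)"
proof -
  have hh: "h holomorphic_on disc" and l: "radial_lim0 (\<lambda>z. \<mu> z * norm (deriv h z))"
    using h by (auto simp: B0_def)
  have "deriv h holomorphic_on disc" using hh by (intro holomorphic_deriv) auto
  then have "continuous_on disc (\<lambda>z. \<mu> z * norm (deriv h z))"
    using weight_cont[OF mu] holomorphic_on_imp_continuous_on
    by (intro continuous_on_mult continuous_on_norm) auto
  then obtain N where "\<forall>z\<in>disc. \<mu> z * norm (deriv h z) \<le> N" using lim0_bdd l by blast
  then show ?thesis by (intro bdd_aboveI2) auto
qed

lemma suff_H0:
  assumes w: "is_weight \<nu>" and pos: "\<forall>z\<in>disc. \<nu> z > 0"
    and a: "\<alpha> > 0" and C: "C > 0"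
    and U: "\<forall>r s. 0 \<le> r \<and> r \<le> s \<and> s < 1 \<longrightarrow>
      \<nu> (complex_of_real r) / (1 - r\<^sup>2) powr \<alpha> \<le> C * (\<nu> (complex_of_real s) / (1 - s\<^sup>2) powr \<alpha>)"
    and mu: "is_weight \<mu>" and g: "g holomorphic_on disc"
    and bdd: "bdd_above ((\<lambda>z. \<mu> z / ((1 - (norm z)\<^sup>2) * \<nu> z) * norm (g z)) ` disc)"
  shows "bounded_op (S_op g) (H0 \<nu>) (H_norm \<nu>) (B0 \<mu>) (B_norm \<mu>)"
proof -
  obtain B where Bd: "\<forall>z\<in>disc. \<mu> z / ((1 - (norm z)\<^sup>2) * \<nu> z) * norm (g z) \<le> B"
    using bdd by (auto simp: bdd_above_def)
  have *: "S_op g f \<in> B0 \<mu> \<and> B_norm \<mu> (S_op g f) \<le> (B * (2 * (2 * (C * 2 powr \<alpha>)))) * H_norm \<nu> f"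
    if fH: "f \<in> H0 \<nu>" for f
  proof -
    have f: "f holomorphic_on disc" and l: "radial_lim0 (\<lambda>z. \<nu> z * norm (f z))"
      using fH by (auto simp: H0_def)
    obtain N0 where "\<forall>z\<in>disc. \<nu> z * norm (f z) \<le> N0" using H0_bdd[OF w f l] by blast
    then have bf: "bdd_above ((\<lambda>z. \<nu> z * norm (f z)) ` disc)" by (intro bdd_aboveI2) auto
    have fb: "\<forall>w\<in>disc. \<nu> w * norm (f w) \<le> H_norm \<nu> f"
      unfolding H_norm_def using bf by (auto intro: cSUP_upper)
    note sc = suff_core[OF w pos a C U mu g Bd f fb]
    have "S_op g f \<in> B0 \<mu>"
      using S_op_holo[OF f g] suff_B0[OF w pos a C U mu g Bd f l] by (simp add: B0_def)
    then show ?thesis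
      using sc by (auto simp: mult_ac)
  qed
  then show ?thesis unfolding bounded_op_def by blast
qed

lemma fa_norm_le:
  assumes az: "a \<in> disc" and va: "\<nu> a > 0" and z: "z \<in> disc"
  shows "norm (fa \<nu> \<beta> a z) \<le> ((1 - (norm a)\<^sup>2) ^ \<beta> / \<nu> a) / (1 - norm a) ^ \<beta>"
proof -
  define d where "d = norm (1 - cnj a * z)"
  define A where "A = 1 - (norm a)\<^sup>2"
  have a1: "norm a < 1" and z1: "norm z < 1" using az z by auto
  have dge: "d \<ge> 1 - norm a * norm z" using fa_denom_ge[OF az z] by (simp add: d_def)
  have "norm a * norm z \<le> norm a" using z1 by (simp add: mult_left_le)
  then have d1: "d \<ge> 1 - norm a" using dge by linarith
  have A0: "A > 0" using a1 by (simp add: A_def abs_square_less_1)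
  have "norm (fa \<nu> \<beta> a z) = norm (complex_of_real (A ^ \<beta> / \<nu> a)) / d ^ \<beta>"
    by (simp only: fa_def A_def d_def norm_divide norm_power)
  also have "norm (complex_of_real (A ^ \<beta> / \<nu> a)) = A ^ \<beta> / \<nu> a"
    using A0 va by (simp only: norm_of_real) simp
  finally have eq: "norm (fa \<nu> \<beta> a z) = A ^ \<beta> / \<nu> a / d ^ \<beta>" .
  have "A ^ \<beta> / \<nu> a / d ^ \<beta> \<le> A ^ \<beta> / \<nu> a / (1 - norm a) ^ \<beta>"
  proof (rule divide_left_mono)
    show "(1 - norm a) ^ \<beta> \<le> d ^ \<beta>" using d1 a1 by (intro power_mono) auto
    show "0 \<le> A ^ \<beta> / \<nu> a" using A0 va by simp
    show "0 < d ^ \<beta> * (1 - norm a) ^ \<beta>" using d1 a1 by simp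
  qed
  then show ?thesis using eq by (simp add: A_def)
qed

lemma id_bound:
  assumes w: "is_weight \<nu>" and pos: "\<forall>z\<in>disc. \<nu> z > 0"
  shows "\<forall>w\<in>disc. \<nu> w * norm w \<le> \<nu> 0"
proof
  fix x :: complex assume wd: "x \<in> disc"
  have d0: "(0::complex) \<in> disc" by simp
  have "\<nu> x * norm x \<le> \<nu> x * 1" using wd pos by (intro mult_left_mono) (auto simp: less_imp_le)
  also have "\<dots> \<le> \<nu> 0" using weight_dec[OF w d0 wd] by simp
  finally show "\<nu> x * norm x \<le> \<nu> 0" .
qed

theorem theorem5:
  fixes g :: "complex \<Rightarrow> complex" and \<nu> \<mu> :: "complex \<Rightarrow> real"
  assumes "g holomorphic_on disc"
    and "is_weight \<nu>" and "\<forall>z\<in>disc. \<nu> z > 0" and "property_U \<nu>"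
    and "is_weight \<mu>"
  shows "(bounded_op (S_op g) (Hinf \<nu>) (H_norm \<nu>) (Binf \<mu>) (B_norm \<mu>)
           \<longleftrightarrow> bdd_above ((\<lambda>z. \<mu> z / ((1 - (norm z)\<^sup>2) * \<nu> z) * norm (g z)) ` disc))
       \<and> (typical_weight \<nu> \<and> typical_weight \<mu> \<longrightarrow>
           (bounded_op (S_op g) (Hinf \<nu>) (H_norm \<nu>) (Binf \<mu>) (B_norm \<mu>)
            \<longleftrightarrow> bounded_op (S_op g) (H0 \<nu>) (H_norm \<nu>) (B0 \<mu>) (B_norm \<mu>)))"
proof -
  note g = assms(1) and w = assms(2) and pos = assms(3) and mu = assms(5)
  obtain \<alpha> C where a: "\<alpha> > 0" and C: "C > 0" and U: "\<forall>r s. 0 \<le> r \<and> r \<le> s \<and> s < 1 \<longrightarrow>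
      \<nu> (complex_of_real r) / (1 - r\<^sup>2) powr \<alpha> \<le> C * (\<nu> (complex_of_real s) / (1 - s\<^sup>2) powr \<alpha>)"
    using assms(4) unfolding property_U_def by blast
  define m where "m = nat \<lceil>\<alpha>\<rceil>"
  have ab: "\<alpha> \<le> real (Suc m)" using real_nat_ceiling_ge[of \<alpha>] by (simp add: m_def)
  let ?M = "bdd_above ((\<lambda>z. \<mu> z / ((1 - (norm z)\<^sup>2) * \<nu> z) * norm (g z)) ` disc)"
  let ?B1 = "bounded_op (S_op g) (Hinf \<nu>) (H_norm \<nu>) (Binf \<mu>) (B_norm \<mu>)"
  let ?B3 = "bounded_op (S_op g) (H0 \<nu>) (H_norm \<nu>) (B0 \<mu>) (B_norm \<mu>)"
  have idb: "\<forall>w\<in>disc. \<nu> w * norm w \<le> \<nu> 0" using id_bound[OF w pos] .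
  have 12: "?B1 \<longleftrightarrow> ?M"
  proof
    assume b1: ?B1
    show ?M
    proof (rule nec[OF w pos a C U mu g ab b1])
      show "\<forall>h\<in>Binf \<mu>. bdd_above ((\<lambda>z. \<mu> z * norm (deriv h z)) ` disc)"
        by (simp add: Binf_def)
      show "\<forall>a\<in>disc. fa \<nu> (Suc m) a \<in> Hinf \<nu>"
      proof
        fix a assume az: "a \<in> disc"
        have "bdd_above ((\<lambda>z. \<nu> z * norm (fa \<nu> (Suc m) a z)) ` disc)"
          using fa_bound[OF w pos a C U ab az] by (intro bdd_aboveI2) blast
        then show "fa \<nu> (Suc m) a \<in> Hinf \<nu>" using fa_holo[OF az] by (simp add: Hinf_def)
      qed
      have "bdd_above ((\<lambda>z. \<nu> z * norm z) ` disc)" using idb by (intro bdd_aboveI2) blast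
      then show "(\<lambda>z. z) \<in> Hinf \<nu>" by (simp add: Hinf_def)
    qed
  next
    assume ?M
    then show ?B1 using suff_Hinf[OF w pos a C U mu g] by blast
  qed
  have 13: "?B1 \<longleftrightarrow> ?B3" if tw: "typical_weight \<nu>" "typical_weight \<mu>"
  proof
    assume ?B1
    then have ?M using 12 by (rule iffD1[rotated])
    then show ?B3 using suff_H0[OF w pos a C U mu g] by blast
  next
    assume b3: ?B3
    have l\<nu>: "radial_lim0 \<nu>" using tw by (simp add: typical_weight_def)
    have nn: "\<forall>z\<in>disc. 0 \<le> \<nu> z" using pos less_imp_le by blast
    have ?M
    proof (rule nec[OF w pos a C U mu g ab b3])
      show "\<forall>h\<in>B0 \<mu>. bdd_above ((\<lambda>z. \<mu> z * norm (deriv h z)) ` disc)"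
        using B0_bdd[OF mu] by (intro ballI)
      show "\<forall>a\<in>disc. fa \<nu> (Suc m) a \<in> H0 \<nu>"
      proof
        fix a assume az: "a \<in> disc"
        have va: "\<nu> a > 0" using pos az by blast
        have "radial_lim0 (\<lambda>z. \<nu> z * norm (fa \<nu> (Suc m) a z))"
          using fa_norm_le[of a \<nu>, OF az va] by (intro lim0_times_bdd[OF l\<nu> nn]) blast
        then show "fa \<nu> (Suc m) a \<in> H0 \<nu>" using fa_holo[OF az] by (simp add: H0_def)
      qed
      have "radial_lim0 (\<lambda>z. \<nu> z * norm z)"
        by (rule lim0_times_bdd[OF l\<nu> nn, of "\<lambda>z. z" 1]) simp
      then show "(\<lambda>z. z) \<in> H0 \<nu>" by (simp add: H0_def)
    qed
    then show ?B1 using 12 by (rule iffD2[rotated])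
  qed
  show ?thesis using 12 13 by (intro conjI impI) auto
qed

end
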